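(* Let $(\Omega,\mathcal A)$ be a Borel space, $(\Omega,X_\bullet)$ a Borel field of metric spaces, and $U_\bullet$ a subfield such that $U_\omega$ is open in $X_\omega$ for every $\omega$. If there is a fundamental family $\mathcal D$ of $\mathcal L(\Omega,X_\bullet)$ such that $\{\omega\in\Omega\mid x_\omega\in U_\omega\}\in\mathcal A$ for every $x_\bullet\in\mathcal D$, then $U_\bullet$ is a Borel subfield.
   Context: Borel field of metric spaces: $(X_\omega,d_\omega)_{\omega\in\Omega}$ metric spaces; a section is $x_\bullet=(x_\omega)$, $x_\omega\in X_\omega$. A Borel structure is a set $\mathcal L(\Omega,X_\bullet)$ of sections such that (a) $\omega\mapsto d_\omega(x_\omega,y_\omega)$ is Borel for all $x_\bullet,y_\bullet\in\mathcal L$; (b) any section $y_\bullet$ with $\omega\mapsto d_\omega(x_\omega,y_\omega)$ Borel for all $x_\bullet\in\mathcal L$ lies in $\mathcal L$; (c) there is a countable $\mathcal D=\{x^n_\bullet\}\subseteq\mathcal L$ (fundamental family) with $\{x^n_\omega\}_n$ dense in $X_\omega$ for all $\omega$. For Borel $\Omega'$, $\mathcal L(\Omega',X_\bullet)$ = restrictions to $\Omega'$ of Borel sections. A subfield is $A_\bullet=(A_\omega)$ with $A_\omega\subseteq X_\omega$ (possibly empty); it is Borel if $\Omega'=\{\omega:A_\omega\ne\emptyset\}\in\mathcal A$ and there are countably many $y^n_\bullet\in\mathcal L(\Omega',X_\bullet)$ with $y^n_\omega\in A_\omega$ and $A_\omega\subseteq\overline{\{y^n_\omega\}_n}$ for all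 $\omega\in\Omega'$. *)

theory Defs
  imports "HOL-Analysis.Analysis"
begin

definition is_section :: "'w measure \<Rightarrow> ('w \<Rightarrow> 'x metric) \<Rightarrow> ('w \<Rightarrow> 'x) \<Rightarrow> bool" where
  "is_section M X s \<longleftrightarrow> (\<forall>\<omega>\<in>space M. s \<omega> \<in> mspace (X \<omega>))"

definition dist_fun :: "('w \<Rightarrow> 'x metric) \<Rightarrow> ('w \<Rightarrow> 'x) \<Rightarrow> ('w \<Rightarrow> 'x) \<Rightarrow> 'w \<Rightarrow> real" where
  "dist_fun X x y = (\<lambda>\<omega>. mdist (X \<omega>) (x \<omega>) (y \<omega>))"

definition fundamental_family ::
  "'w measure \<Rightarrow> ('w \<Rightarrow> 'x metric) \<Rightarrow> ('w \<Rightarrow> 'x) set \<Rightarrow> ('w \<Rightarrow> 'x) set \<Rightarrow> bool" where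
  "fundamental_family M X L D \<longleftrightarrow> countable D \<and> D \<subseteq> L \<and>
     (\<forall>\<omega>\<in>space M. mtopology_of (X \<omega>) closure_of {x \<omega> | x. x \<in> D} = mspace (X \<omega>))"

definition borel_structure ::
  "'w measure \<Rightarrow> ('w \<Rightarrow> 'x metric) \<Rightarrow> ('w \<Rightarrow> 'x) set \<Rightarrow> bool" where
  "borel_structure M X L \<longleftrightarrow>
     (\<forall>x\<in>L. is_section M X x) \<and>
     (\<forall>x\<in>L. \<forall>y\<in>L. dist_fun X x y \<in> borel_measurable M) \<and>
     (\<forall>y. is_section M X y \<and> (\<forall>x\<in>L. dist_fun X x y \<in> borel_measurable M) \<longrightarrow> y \<in> L) \<and>
     (\<exists>D. fundamental_family M X L D)"

definition restricted_sections ::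
  "('w \<Rightarrow> 'x) set \<Rightarrow> 'w set \<Rightarrow> ('w \<Rightarrow> 'x) set" where
  "restricted_sections L \<Omega>' = {y. \<exists>z\<in>L. \<forall>\<omega>\<in>\<Omega>'. y \<omega> = z \<omega>}"

definition borel_subfield ::
  "'w measure \<Rightarrow> ('w \<Rightarrow> 'x metric) \<Rightarrow> ('w \<Rightarrow> 'x) set \<Rightarrow> ('w \<Rightarrow> 'x set) \<Rightarrow> bool" where
  "borel_subfield M X L A \<longleftrightarrow>
     (let \<Omega>' = {\<omega>\<in>space M. A \<omega> \<noteq> {}} in
       \<Omega>' \<in> sets M \<and>
       (\<exists>Y. countable Y \<and> Y \<subseteq> restricted_sections L \<Omega>' \<and>
          (\<forall>y\<in>Y. \<forall>\<omega>\<in>\<Omega>'. y \<omega> \<in> A \<omega>) \<and>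
          (\<forall>\<omega>\<in>\<Omega>'. A \<omega> \<subseteq> mtopology_of (X \<omega>) closure_of {y \<omega> | y. y \<in> Y})))"

end

theory Submission
  imports Defs
begin

theorem mainTheorem4:
  fixes M :: "'w measure" and X :: "'w \<Rightarrow> 'x metric"
    and L :: "('w \<Rightarrow> 'x) set" and U :: "'w \<Rightarrow> 'x set"
  assumes "borel_structure M X L"
    and "\<forall>\<omega>\<in>space M. U \<omega> \<subseteq> mspace (X \<omega>)"
    and "\<forall>\<omega>\<in>space M. openin (mtopology_of (X \<omega>)) (U \<omega>)"
    and "\<exists>D. fundamental_family M X L D \<and>
           (\<forall>x\<in>D. {\<omega>\<in>space M. x \<omega> \<in> U \<omega>} \<in> sets M)"
  shows "borel_subfield M X L U"
proof -
  obtain D where FD: "fundamental_family M X L D"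
    and ED: "\<forall>x\<in>D. {\<omega>\<in>space M. x \<omega> \<in> U \<omega>} \<in> sets M" using assms(4) by blast
  have cD: "countable D" and DL: "D \<subseteq> L"
    and dens: "\<forall>\<omega>\<in>space M. mtopology_of (X \<omega>) closure_of {x \<omega> | x. x \<in> D} = mspace (X \<omega>)"
    using FD unfolding fundamental_family_def by blast+
  have sec: "\<forall>x\<in>L. is_section M X x"
    and dm: "\<forall>x\<in>L. \<forall>y\<in>L. dist_fun X x y \<in> borel_measurable M"
    and clos: "\<And>y. is_section M X y \<Longrightarrow> (\<forall>x\<in>L. dist_fun X x y \<in> borel_measurable M) \<Longrightarrow> y \<in> L"
    using assms(1) unfolding borel_structure_def by blast+
  define \<Omega>' where "\<Omega>' = {\<omega>\<in>space M. U \<omega> \<noteq> {}}"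
  show ?thesis
  proof (cases "D = {}")
    case True
    have "\<Omega>' = {}"
    proof -
      { fix \<omega> assume "\<omega> \<in> space M"
        then have "mspace (X \<omega>) = {}" using dens True by simp
        then have "U \<omega> = {}" using assms(2) \<open>\<omega> \<in> space M\<close> by blast }
      then show ?thesis unfolding \<Omega>'_def by auto
    qed
    then show ?thesis unfolding borel_subfield_def Let_def \<Omega>'_def[symmetric]
      by (intro conjI exI[of _ "{}"]) auto
  next
    case False
    define xs where "xs = from_nat_into D"
    have rxs: "range xs = D" unfolding xs_def using False cD by (simp add: range_from_nat_into)
    have xsD: "xs m \<in> D" for m using rxs by blast
    have key: "\<exists>m. xs m \<omega> \<in> W" if "\<omega> \<in> space M" "openin (mtopology_of (X \<omega>)) W" "u \<in> W" for \<omega> W u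
    proof -
      have "u \<in> mspace (X \<omega>)" using openin_subset[OF that(2)] that(3) by auto
      then have "u \<in> mtopology_of (X \<omega>) closure_of {x \<omega> | x. x \<in> D}" using dens that(1) by simp
      then have "\<exists>y. y \<in> {x \<omega> | x. x \<in> D} \<and> y \<in> W" using that(2,3) unfolding in_closure_of by simp
      then obtain x where "x \<in> D" "x \<omega> \<in> W" by blast
      then show ?thesis using rxs by (metis imageE)
    qed
    have E: "{\<omega>\<in>space M. xs m \<omega> \<in> U \<omega>} \<in> sets M" for m using ED xsD by blast
    have \<Omega>'eq: "\<Omega>' = (\<Union>m. {\<omega>\<in>space M. xs m \<omega> \<in> U \<omega>})"
      unfolding \<Omega>'_def using key assms(3) by fastforce
    have \<Omega>'M: "\<Omega>' \<in> sets M" unfolding \<Omega>'eq using E by blast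
    define k where "k n \<omega> = (if xs n \<omega> \<in> U \<omega> then n else LEAST m. xs m \<omega> \<in> U \<omega>)" for n \<omega>
    define z where "z n \<omega> = xs (k n \<omega>) \<omega>" for n \<omega>
    have km: "k n \<in> measurable M (count_space UNIV)" for n
      unfolding k_def
    proof (rule measurable_If)
      show "(\<lambda>\<omega>. LEAST m. xs m \<omega> \<in> U \<omega>) \<in> measurable M (count_space UNIV)"
        by (rule measurable_Least) (use E in \<open>simp add: pred_def\<close>)
    qed (use E in auto)
    have zL: "z n \<in> L" for n
    proof (rule clos)
      show "is_section M X (z n)" unfolding is_section_def z_def
        using sec DL xsD unfolding is_section_def by blast
      show "\<forall>x\<in>L. dist_fun X x (z n) \<in> borel_measurable M"
      proof
        fix x assume "x \<in> L"
        have "(\<lambda>\<omega>. dist_fun X x (xs (k n \<omega>)) \<omega>) \<in> borel_measurable M"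
          by (rule measurable_compose_countable'[where I=UNIV])
             (use dm \<open>x \<in> L\<close> DL xsD km in auto)
        then show "dist_fun X x (z n) \<in> borel_measurable M"
          unfolding z_def dist_fun_def by simp
      qed
    qed
    have zU: "z n \<omega> \<in> U \<omega>" if "\<omega> \<in> \<Omega>'" for n \<omega>
    proof (cases "xs n \<omega> \<in> U \<omega>")
      case True then show ?thesis unfolding z_def k_def by simp
    next
      case False
      from that obtain u where "\<omega> \<in> space M" "u \<in> U \<omega>" unfolding \<Omega>'_def by auto
      then have "\<exists>m. xs m \<omega> \<in> U \<omega>" using key assms(3) by blast
      then show ?thesis using False unfolding z_def k_def by (metis (mono_tags, lifting) LeastI_ex)
    qed
    have zcl: "U \<omega> \<subseteq> mtopology_of (X \<omega>) closure_of {y \<omega> | y. y \<in> range z}" if "\<omega> \<in> \<Omega>'" for \<omega>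
    proof
      fix u assume u: "u \<in> U \<omega>"
      have \<omega>M: "\<omega> \<in> space M" using that unfolding \<Omega>'_def by auto
      show "u \<in> mtopology_of (X \<omega>) closure_of {y \<omega> | y. y \<in> range z}"
        unfolding in_closure_of
      proof (intro conjI allI impI)
        show "u \<in> topspace (mtopology_of (X \<omega>))" using u assms(2) \<omega>M by auto
        fix T assume T: "u \<in> T \<and> openin (mtopology_of (X \<omega>)) T"
        have "openin (mtopology_of (X \<omega>)) (T \<inter> U \<omega>)" using T assms(3) \<omega>M by blast
        then obtain m where m: "xs m \<omega> \<in> T \<inter> U \<omega>" using key[OF \<omega>M] T u by blast
        then have "z m \<omega> = xs m \<omega>" unfolding z_def k_def by simp
        moreover have "z m \<omega> \<in> {y \<omega> | y. y \<in> range z}" by blast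
        ultimately show "\<exists>y. y \<in> {y \<omega> | y. y \<in> range z} \<and> y \<in> T" using m by (intro exI[of _ "z m \<omega>"]) simp
      qed
    qed
    show ?thesis unfolding borel_subfield_def Let_def \<Omega>'_def[symmetric]
    proof (intro conjI \<Omega>'M exI[of _ "range z"])
      show "range z \<subseteq> restricted_sections L \<Omega>'"
        unfolding restricted_sections_def using zL by blast
      show "countable (range z)" by simp
      show "\<forall>y\<in>range z. \<forall>\<omega>\<in>\<Omega>'. y \<omega> \<in> U \<omega>" using zU by blast
      show "\<forall>\<omega>\<in>\<Omega>'. U \<omega> \<subseteq> mtopology_of (X \<omega>) closure_of {y \<omega> | y. y \<in> range z}" using zcl by blast
    qed
  qed
qed

end
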